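(* Let $n\ge3$ and let $b_1,\dots,b_n$ be positive integers. For $k=0,\dots,b_1+\dots+b_n-\max\{b_1,\dots,b_n\}$, $$A([\mathbf b],k)=\sum_{(i_2,\dots,i_{n-1})\in\Delta}A_{i_2}A_{i_2,i_3}A_{i_3,i_4}\cdots A_{i_{n-1},i_n},$$ where $i_n:=k$, $A_{i_2}=\binom{b_1}{i_2}\binom{b_2}{i_2}$, and for $s=2,\dots,n-1$, $$A_{i_s,i_{s+1}}=\binom{b_1+\dots+b_s-i_s}{i_{s+1}-i_s}\binom{b_{s+1}+i_s}{i_{s+1}}\ge0,$$ and $\Delta$ is the set of integer tuples $(i_2,\dots,i_{n-1})$ with $0\le i_s\le\min\{b_1+\dots+b_s-\max\{b_1,\dots,b_s\},\ i_{s+1}\}$ for $s=2,\dots,n-1$. In particular each $A([\mathbf b],k)$ is a sum of products of nonnegative integers.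
   Context: $A([\mathbf b],k)$ (Simon Newcomb number) is the number of words $u_1\cdots u_N$, $N=b_1+\dots+b_n$, over $\{1,\dots,n\}$ containing the letter $i$ exactly $b_i$ times, having exactly $k$ descents, where a descent is an index $m$ with $u_m>u_{m+1}$. Binomial coefficients $\binom{a}{m}$ are taken to be $0$ when $m<0$ or $m>a$. *)

theory Defs
  imports Main "HOL-Library.FuncSet"
begin

definition descents :: "nat list \<Rightarrow> nat set" where
  "descents w = {m. Suc m < length w \<and> w ! m > w ! Suc m}"

definition newcomb :: "nat \<Rightarrow> (nat \<Rightarrow> nat) \<Rightarrow> nat \<Rightarrow> nat" where
  "newcomb n b k = card {w :: nat list.
      length w = (\<Sum>j=1..n. b j) \<and> set w \<subseteq> {1..n} \<and>
      (\<forall>i\<in>{1..n}. count_list w i = b i) \<and> card (descents w) = k}"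

definition psum :: "(nat \<Rightarrow> nat) \<Rightarrow> nat \<Rightarrow> nat" where
  "psum b s = (\<Sum>j=1..s. b j)"

definition pmax :: "(nat \<Rightarrow> nat) \<Rightarrow> nat \<Rightarrow> nat" where
  "pmax b s = Max (b ` {1..s})"

text \<open>Delta: tuples (i_2,...,i_{n-1}), represented as extensional functions on {2..n-1},
  with i_n := k.\<close>
definition newcomb_delta :: "nat \<Rightarrow> (nat \<Rightarrow> nat) \<Rightarrow> nat \<Rightarrow> (nat \<Rightarrow> nat) set" where
  "newcomb_delta n b k = {i \<in> {2..n-1} \<rightarrow>\<^sub>E (UNIV :: nat set).
      \<forall>s\<in>{2..n-1}. i s \<le> min (psum b s - pmax b s) ((i(n := k)) (Suc s))}"

definition newcomb_term :: "nat \<Rightarrow> (nat \<Rightarrow> nat) \<Rightarrow> nat \<Rightarrow> (nat \<Rightarrow> nat) \<Rightarrow> nat" where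
  "newcomb_term n b k i =
     (let I = i(n := k) in
      (b 1 choose I 2) * (b 2 choose I 2) *
      (\<Prod>s\<in>{2..n-1}. ((psum b s - I s) choose (I (Suc s) - I s)) *
                      ((b (Suc s) + I s) choose I (Suc s))))"

end

theory Submission
  imports Defs
begin

fun ndes :: "nat list \<Rightarrow> nat" where
  "ndes (x # y # r) = (if y < x then 1 else 0) + ndes (y # r)"
| "ndes _ = 0"

fun mrg :: "nat \<Rightarrow> nat list \<Rightarrow> nat list \<Rightarrow> nat list" where
  "mrg L [] cs = replicate (sum_list cs) L"
| "mrg L (x # u) [] = x # u"
| "mrg L (x # u) (c # cs) = replicate c L @ x # mrg L u cs"

fun gaps :: "nat \<Rightarrow> nat list \<Rightarrow> nat list" where
  "gaps L [] = [0]"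
| "gaps L (x # w) = (if x = L then (hd (gaps L w) + 1) # tl (gaps L w) else 0 # gaps L w)"

fun patp :: "nat \<Rightarrow> nat list \<Rightarrow> bool list" where
  "patp x [] = [False]"
| "patp x (y # u) = (x \<le> y) # patp y u"

fun pat :: "nat list \<Rightarrow> bool list" where
  "pat [] = [False]"
| "pat (y # u) = True # patp y u"

fun cnt :: "bool list \<Rightarrow> nat list \<Rightarrow> nat" where
  "cnt (p # P) (c # cs) = (if p \<and> 0 < c then 1 else 0) + cnt P cs"
| "cnt _ _ = 0"

lemma ndes_rep: "x \<le> L \<Longrightarrow> ndes (x # replicate c L) = 0"
  by (induction c arbitrary: x) auto

lemma ndes_rep0: "ndes (replicate c L) = 0"
  by (cases c) (auto simp: ndes_rep)

lemma ndes_rep_app: "y < L \<Longrightarrow> ndes (replicate (Suc c) L @ y # r) = Suc (ndes (y # r))"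
  by (induction c) auto

lemma ndes_rep_app2: "x \<le> L \<Longrightarrow> y < L \<Longrightarrow> ndes (x # replicate (Suc c) L @ y # r) = Suc (ndes (y # r))"
  using ndes_rep_app[of y L c r] by simp

lemma ndes_mrgp:
  "\<forall>z\<in>set u. z < L \<Longrightarrow> x < L \<Longrightarrow> length cs = Suc (length u) \<Longrightarrow>
   ndes (x # mrg L u cs) = ndes (x # u) + cnt (patp x u) cs"
proof (induction u arbitrary: x cs)
  case Nil
  then obtain c where "cs = [c]" by (cases cs) auto
  then show ?case using Nil by (simp add: ndes_rep)
next
  case (Cons y u)
  then obtain c cs' where cs: "cs = c # cs'" by (cases cs) auto
  have IH: "ndes (y # mrg L u cs') = ndes (y # u) + cnt (patp y u) cs'"
    using Cons cs by auto
  show ?case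
  proof (cases c)
    case 0
    then show ?thesis using IH cs by simp
  next
    case (Suc c')
    have "ndes (x # mrg L (y # u) cs) = Suc (ndes (y # mrg L u cs'))"
      using cs Suc Cons.prems ndes_rep_app2[of x L y c' "mrg L u cs'"] by simp
    then show ?thesis using IH cs Suc by simp
  qed
qed

lemma ndes_mrg:
  "\<forall>z\<in>set u. z < L \<Longrightarrow> length cs = Suc (length u) \<Longrightarrow>
   ndes (mrg L u cs) = ndes u + cnt (pat u) cs"
proof (cases u)
  case Nil
  assume "length cs = Suc (length u)"
  then obtain c where "cs = [c]" using Nil by (cases cs) auto
  then show ?thesis using Nil by (simp add: ndes_rep0)
next
  case (Cons y u')
  assume a: "\<forall>z\<in>set u. z < L" "length cs = Suc (length u)"
  then obtain c cs' where cs: "cs = c # cs'" by (cases cs) auto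
  have IH: "ndes (y # mrg L u' cs') = ndes (y # u') + cnt (patp y u') cs'"
    using ndes_mrgp[of u' L y cs'] a Cons cs by auto
  show ?thesis
  proof (cases c)
    case 0
    then show ?thesis using IH cs Cons by simp
  next
    case (Suc c')
    have "ndes (mrg L u cs) = Suc (ndes (y # mrg L u' cs'))"
      using cs Suc a Cons ndes_rep_app[of y L c' "mrg L u' cs'"] by simp
    then show ?thesis using IH cs Suc Cons by simp
  qed
qed

lemma gaps_rep: "x \<noteq> L \<Longrightarrow> gaps L (replicate c L @ x # r) = c # gaps L r"
  by (induction c) auto

lemma gaps_rep0: "gaps L (replicate c L) = [c]"
  by (induction c) auto

lemma gaps_mrg: "L \<notin> set u \<Longrightarrow> length cs = Suc (length u) \<Longrightarrow> gaps L (mrg L u cs) = cs"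
proof (induction u arbitrary: cs)
  case Nil
  then obtain c where "cs = [c]" by (cases cs) auto
  then show ?case by (simp add: gaps_rep0)
next
  case (Cons y u)
  then obtain c cs' where "cs = c # cs'" by (cases cs) auto
  then show ?case using Cons by (simp add: gaps_rep)
qed

lemma filter_mrg: "L \<notin> set u \<Longrightarrow> length cs = Suc (length u) \<Longrightarrow> filter (\<lambda>x. x \<noteq> L) (mrg L u cs) = u"
proof (induction u arbitrary: cs)
  case Nil
  then obtain c where "cs = [c]" by (cases cs) auto
  then show ?case by simp
next
  case (Cons y u)
  then obtain c cs' where "cs = c # cs'" by (cases cs) auto
  then show ?case using Cons by simp
qed

lemma gaps_ne: "gaps L w \<noteq> []"
  by (induction w) auto

lemma mrg_gaps: "mrg L (filter (\<lambda>x. x \<noteq> L) w) (gaps L w) = w"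
proof (induction w)
  case Nil
  then show ?case by simp
next
  case (Cons x w)
  show ?case
  proof (cases "x = L")
    case True
    obtain g gs where g: "gaps L w = g # gs" using gaps_ne[of L w] by (cases "gaps L w") auto
    show ?thesis
    proof (cases "filter (\<lambda>x. x \<noteq> L) w")
      case Nil
      then show ?thesis using Cons True g by simp
    next
      case (Cons y v)
      then show ?thesis using Cons.IH True g by simp
    qed
  next
    case False
    then show ?thesis using Cons by simp
  qed
qed

lemma length_gaps: "length (gaps L w) = Suc (length (filter (\<lambda>x. x \<noteq> L) w))"
proof (induction w)
  case (Cons x w)
  then show ?case using gaps_ne[of L w] by (cases "gaps L w") auto
qed simp

lemma sum_gaps: "sum_list (gaps L w) = count_list w L"
proof (induction w)
  case (Cons x w)
  then show ?case using gaps_ne[of L w] by (cases "gaps L w") auto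
qed simp

lemma length_mrg: "length cs = Suc (length u) \<Longrightarrow> length (mrg L u cs) = length u + sum_list cs"
proof (induction u arbitrary: cs)
  case Nil
  then obtain c where "cs = [c]" by (cases cs) auto
  then show ?case by simp
next
  case (Cons y u)
  then obtain c cs' where "cs = c # cs'" by (cases cs) auto
  then show ?case using Cons by simp
qed

lemma set_mrg: "length cs = Suc (length u) \<Longrightarrow> set (mrg L u cs) \<subseteq> insert L (set u)"
proof (induction u arbitrary: cs)
  case Nil
  then obtain c where "cs = [c]" by (cases cs) auto
  then show ?case by auto
next
  case (Cons y u)
  then obtain c cs' where "cs = c # cs'" by (cases cs) auto
  then show ?case using Cons by auto
qed

lemma count_list_rep: "count_list (replicate c L) i = (if i = L then c else 0)"
  by (induction c) auto

lemma count_mrg: "length cs = Suc (length u) \<Longrightarrow> L \<notin> set u \<Longrightarrow>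
  count_list (mrg L u cs) i = (if i = L then sum_list cs else count_list u i)"
proof (induction u arbitrary: cs)
  case Nil
  then obtain c where "cs = [c]" by (cases cs) auto
  then show ?case by (simp add: count_list_rep)
next
  case (Cons y u)
  then obtain c cs' where "cs = c # cs'" by (cases cs) auto
  then show ?case using Cons by (auto simp: count_list_rep)
qed

lemma count_filter: "count_list (filter P xs) i = (if P i then count_list xs i else 0)"
  by (induction xs) auto

lemma length_count: "finite A \<Longrightarrow> set xs \<subseteq> A \<Longrightarrow> length xs = (\<Sum>i\<in>A. count_list xs i)"
proof (induction xs)
  case Nil
  then show ?case by simp
next
  case (Cons x xs)
  then have "(\<Sum>i\<in>A. count_list (x # xs) i) = (\<Sum>i\<in>A. (if x = i then 1 else 0) + count_list xs i)"
    by (intro sum.cong) auto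
  also have "\<dots> = 1 + (\<Sum>i\<in>A. count_list xs i)"
    using Cons by (simp add: sum.distrib)
  finally show ?case using Cons by simp
qed

lemma descents_card: "card (descents w) = ndes w"
proof (induction w rule: ndes.induct)
  case (1 x y r)
  have eq: "descents (x # y # r) = (if y < x then insert 0 else id) (Suc ` descents (y # r))"
    unfolding descents_def
    by (auto simp: image_iff split: if_splits) (case_tac xa; auto)+
  have fin: "finite (descents (y # r))" unfolding descents_def by (rule finite_subset[of _ "{..<length (y#r)}"]) auto
  show ?case using 1 fin by (simp add: eq card_image)
next
  case "2_1"
  then show ?case by (simp add: descents_def)
next
  case ("2_2" v)
  then show ?case by (simp add: descents_def)
qed

lemma ndes_bound: "ndes w + count_list w i + (if w \<noteq> [] \<and> hd w < i then 1 else 0) \<le> length w"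
  by (induction w rule: ndes.induct) auto

lemma hockey: "F \<le> N \<Longrightarrow> (\<Sum>x\<le>m. (m - x + F) choose N) = (m + F + 1) choose (N + 1)"
proof (induction m)
  case 0
  then show ?case by (simp add: binomial_eq_0)
next
  case (Suc m)
  have "(\<Sum>x\<le>Suc m. (Suc m - x + F) choose N) = ((Suc m + F) choose N) + (\<Sum>x\<le>m. (m - x + F) choose N)"
    by (subst sum.atMost_Suc_shift) simp
  also have "\<dots> = ((Suc m + F) choose N) + ((m + F + 1) choose (N + 1))" by (simp only: Suc.IH[OF Suc.prems])
  also have "\<dots> = (Suc m + F + 1) choose (N + 1)" by simp
  finally show ?case .
qed

lemma member_le_sum: "x \<in> set (xs::nat list) \<Longrightarrow> x \<le> sum_list xs"
  by (induction xs) auto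

lemma fin_lists: "finite {cs::nat list. length cs = n \<and> sum_list cs = m \<and> R cs}"
proof (rule finite_subset)
  show "{cs::nat list. length cs = n \<and> sum_list cs = m \<and> R cs} \<subseteq> {xs. set xs \<subseteq> {0..m} \<and> length xs = n}"
    using member_le_sum by fastforce
  show "finite {xs. set xs \<subseteq> {0..m} \<and> length xs = n}"
    by (rule finite_lists_length_eq) simp
qed

lemma card_cons_split:
  "card {cs::nat list. length cs = Suc n \<and> sum_list cs = m \<and> R cs} =
   (\<Sum>x\<le>m. card {cs'. length cs' = n \<and> sum_list cs' = m - x \<and> R (x # cs')})"
proof -
  have eq: "{cs::nat list. length cs = Suc n \<and> sum_list cs = m \<and> R cs} =
    (\<Union>x\<in>{..m}. (\<lambda>cs'. x # cs') ` {cs'. length cs' = n \<and> sum_list cs' = m - x \<and> R (x # cs')})"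
    by (auto simp: length_Suc_conv image_iff)
  show ?thesis unfolding eq
    by (subst card_UN_disjoint) (auto simp: fin_lists card_image)
qed

lemma G_formula:
  "card {cs. length cs = length (Q @ [False]) \<and> sum_list cs = m \<and> cnt (Q @ [False]) cs = t} =
   (count_list Q True choose t) * ((m + count_list Q False) choose (t + count_list Q False))"
proof (induction Q arbitrary: m t)
  case Nil
  have "{cs. length cs = length ([] @ [False]) \<and> sum_list cs = m \<and> cnt ([] @ [False]) cs = t} =
        (if t = 0 then {[m]} else {})"
    by (auto simp: length_Suc_conv)
  then show ?case by simp
next
  case (Cons p Q)
  define a where "a = count_list Q True"
  define F where "F = count_list Q False"
  have IH: "\<And>m t. card {cs. length cs = length (Q @ [False]) \<and> sum_list cs = m \<and> cnt (Q @ [False]) cs = t}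
     = (a choose t) * ((m + F) choose (t + F))" using Cons a_def F_def by simp
  have split: "card {cs. length cs = length ((p # Q) @ [False]) \<and> sum_list cs = m \<and> cnt ((p # Q) @ [False]) cs = t}
     = (\<Sum>x\<le>m. card {cs'. length cs' = length (Q @ [False]) \<and> sum_list cs' = m - x \<and>
          (if p \<and> 0 < x then 1 else 0) + cnt (Q @ [False]) cs' = t})"
    using card_cons_split[of "length (Q @ [False])" m "\<lambda>cs. cnt ((p # Q) @ [False]) cs = t"] by simp
  show ?case
  proof (cases p)
    case False
    have "card {cs. length cs = length ((p # Q) @ [False]) \<and> sum_list cs = m \<and> cnt ((p # Q) @ [False]) cs = t}
       = (\<Sum>x\<le>m. (a choose t) * ((m - x + F) choose (t + F)))"
      unfolding split using False IH by simp
    also have "\<dots> = (a choose t) * (\<Sum>x\<le>m. ((m - x + F) choose (t + F)))"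
      by (rule sum_distrib_left[symmetric])
    also have "\<dots> = (a choose t) * ((m + F + 1) choose (t + F + 1))"
      by (simp only: hockey[OF le_add2])
    finally show ?thesis using False a_def F_def by simp
  next
    case True
    define h where "h x = card {cs'. length cs' = length (Q @ [False]) \<and> sum_list cs' = m - x \<and>
          (if p \<and> 0 < x then 1 else 0) + cnt (Q @ [False]) cs' = t}" for x
    have h0: "h 0 = (a choose t) * ((m + F) choose (t + F))" unfolding h_def using IH by simp
    have hS: "h (Suc y) = (if t = 0 then 0 else (a choose (t - 1)) * ((m - Suc y + F) choose (t - 1 + F)))" for y
    proof (cases t)
      case 0
      then show ?thesis unfolding h_def using True by simp
    next
      case (Suc t')
      then show ?thesis unfolding h_def using True IH[of "m - Suc y" t'] by simp
    qed
    have tot: "(\<Sum>x\<le>m. h x) = ((Suc a) choose t) * ((m + F) choose (t + F))"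
    proof (cases m)
      case 0
      then show ?thesis using h0 by (cases t) (simp_all add: binomial_eq_0)
    next
      case (Suc m')
      have "(\<Sum>x\<le>m. h x) = h 0 + (\<Sum>y\<le>m'. h (Suc y))" unfolding Suc by (rule sum.atMost_Suc_shift)
      also have "\<dots> = ((Suc a) choose t) * ((m + F) choose (t + F))"
      proof (cases t)
        case 0
        then show ?thesis using h0 hS by simp
      next
        case (Suc t')
        have "(\<Sum>y\<le>m'. h (Suc y)) = (\<Sum>y\<le>m'. (a choose t') * ((m' - y + F) choose (t' + F)))"
          using hS Suc \<open>m = Suc m'\<close> by simp
        also have "\<dots> = (a choose t') * (\<Sum>y\<le>m'. ((m' - y + F) choose (t' + F)))"
          by (rule sum_distrib_left[symmetric])
        also have "\<dots> = (a choose t') * ((m' + F + 1) choose (t' + F + 1))"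
          by (simp only: hockey[OF le_add2])
        finally show ?thesis using h0 Suc \<open>m = Suc m'\<close> by (simp add: algebra_simps)
      qed
      finally show ?thesis .
    qed
    show ?thesis using split tot True a_def F_def unfolding h_def by simp
  qed
qed

lemma patp_last: "\<exists>Q. patp x u = Q @ [False] \<and> length Q = length u \<and>
   count_list Q True + ndes (x # u) = length u \<and> count_list Q False = ndes (x # u)"
proof (induction u arbitrary: x)
  case Nil
  then show ?case by simp
next
  case (Cons y u)
  then obtain Q where Q: "patp y u = Q @ [False]" "length Q = length u"
    "count_list Q True + ndes (y # u) = length u" "count_list Q False = ndes (y # u)" by blast
  show ?case
    by (rule exI[of _ "(x \<le> y) # Q"]) (use Q in auto)
qed

lemma pat_last: "\<exists>Q. pat u = Q @ [False] \<and> length Q = length u \<and>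
   count_list Q True + ndes u = length u \<and> count_list Q False = ndes u"
proof (cases u)
  case Nil
  then show ?thesis by simp
next
  case (Cons y u')
  then obtain Q where Q: "patp y u' = Q @ [False]" "length Q = length u'"
    "count_list Q True + ndes (y # u') = length u'" "count_list Q False = ndes (y # u')"
    using patp_last by blast
  show ?thesis
    by (rule exI[of _ "True # Q"]) (use Q Cons in auto)
qed

lemma inner_count:
  "card {cs. length cs = Suc (length u) \<and> sum_list cs = m \<and> ndes u + cnt (pat u) cs = j} =
   (if ndes u \<le> j then ((length u - ndes u) choose (j - ndes u)) * ((m + ndes u) choose j) else 0)"
proof -
  obtain Q where Q: "pat u = Q @ [False]" "length Q = length u"
    "count_list Q True + ndes u = length u" "count_list Q False = ndes u" using pat_last by blast
  show ?thesis
  proof (cases "ndes u \<le> j")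
    case True
    have "{cs. length cs = Suc (length u) \<and> sum_list cs = m \<and> ndes u + cnt (pat u) cs = j} =
      {cs. length cs = length (Q @ [False]) \<and> sum_list cs = m \<and> cnt (Q @ [False]) cs = j - ndes u}"
      using True Q by auto
    moreover have "count_list Q True = length u - ndes u" using Q by simp
    ultimately show ?thesis using G_formula[of Q m "j - ndes u"] Q True by simp
  next
    case False
    then have "{cs. length cs = Suc (length u) \<and> sum_list cs = m \<and> ndes u + cnt (pat u) cs = j} = {}"
      by auto
    then show ?thesis using False by simp
  qed
qed



definition U :: "(nat \<Rightarrow> nat) \<Rightarrow> nat \<Rightarrow> nat list set" where
  "U b s = {u. length u = psum b s \<and> set u \<subseteq> {1..s} \<and> (\<forall>i\<in>{1..s}. count_list u i = b i)}"

lemma newcomb_U: "newcomb s b d = card {u \<in> U b s. ndes u = d}"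
  unfolding newcomb_def U_def psum_def by (simp add: descents_card conj_assoc)

lemma finite_U: "finite (U b s)"
proof (rule finite_subset)
  show "U b s \<subseteq> {xs. set xs \<subseteq> {1..s} \<and> length xs = psum b s}" unfolding U_def by auto
  show "finite {xs. set xs \<subseteq> {1..s} \<and> length xs = psum b s}"
    by (rule finite_lists_length_eq) simp
qed

lemma ndes_U_bound: assumes "s \<ge> 1" "u \<in> U b s" shows "ndes u \<le> psum b s - pmax b s"
proof -
  have "pmax b s \<in> b ` {1..s}" unfolding pmax_def using assms(1) by (intro Max_in) auto
  then obtain i where i: "i \<in> {1..s}" "pmax b s = b i" by auto
  have "ndes u + count_list u i \<le> length u" using ndes_bound[of u i] by simp
  then show ?thesis using assms i unfolding U_def by auto
qed

lemma psum_Suc: "psum b (Suc s) = psum b s + b (Suc s)"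
  unfolding psum_def by simp

lemma recur:
  assumes s: "s \<ge> 1"
  shows "newcomb (Suc s) b j = (\<Sum>d\<in>{0..min (psum b s - pmax b s) j}.
     newcomb s b d * ((psum b s - d) choose (j - d)) * ((b (Suc s) + d) choose j))"
proof -
  define L where "L = Suc s"
  define C where "C u = {cs. length cs = Suc (length u) \<and> sum_list cs = b L \<and> ndes u + cnt (pat u) cs = j}" for u
  define W where "W = {w. length w = psum b L \<and> set w \<subseteq> {1..L} \<and> (\<forall>i\<in>{1..L}. count_list w i = b i) \<and> card (descents w) = j}"
  define Sig where "Sig = Sigma (U b s) C"
  define M where "M = (\<lambda>(u, cs). mrg L u cs)"
  have Ulet: "\<forall>z\<in>set u. z < L" "L \<notin> set u" if "u \<in> U b s" for u
    using that unfolding U_def L_def by auto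
  have W_eq: "W = M ` Sig"
  proof
    show "W \<subseteq> M ` Sig"
    proof
      fix w assume w: "w \<in> W"
      define u where "u = filter (\<lambda>x. x \<noteq> L) w"
      define cs where "cs = gaps L w"
      have setu: "set u \<subseteq> {1..s}" using w unfolding u_def W_def L_def by auto
      have cu: "count_list u i = b i" if "i \<in> {1..s}" for i
        using w that unfolding u_def W_def L_def by (auto simp: count_filter)
      have lu: "length u = psum b s"
        using length_count[of "{1..s}" u] setu cu unfolding psum_def by simp
      have uU: "u \<in> U b s" unfolding U_def using setu cu lu by auto
      have lcs: "length cs = Suc (length u)" unfolding cs_def u_def by (rule length_gaps)
      have mw: "mrg L u cs = w" unfolding u_def cs_def by (rule mrg_gaps)
      have scs: "sum_list cs = b L" unfolding cs_def using w sum_gaps unfolding W_def L_def by auto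
      have "ndes u + cnt (pat u) cs = ndes w" using ndes_mrg[of u L cs] Ulet[OF uU] lcs mw by simp
      also have "\<dots> = j" using w descents_card unfolding W_def by simp
      finally have "cs \<in> C u" unfolding C_def using lcs scs by simp
      then show "w \<in> M ` Sig" unfolding Sig_def M_def using uU mw by (auto simp: image_iff intro!: bexI[of _ "(u, cs)"])
    qed
  next
    show "M ` Sig \<subseteq> W"
    proof
      fix w assume "w \<in> M ` Sig"
      then obtain u cs where uc: "u \<in> U b s" "cs \<in> C u" "w = mrg L u cs" unfolding Sig_def M_def by auto
      have lcs: "length cs = Suc (length u)" "sum_list cs = b L" "ndes u + cnt (pat u) cs = j"
        using uc unfolding C_def by auto
      have "length w = psum b L" using uc(3) length_mrg[OF lcs(1)] lcs uc(1)
        unfolding U_def L_def by (simp add: psum_Suc)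
      moreover have "set w \<subseteq> {1..L}"
      proof -
        have "set w \<subseteq> insert L (set u)" using uc(3) set_mrg[OF lcs(1)] by simp
        moreover have "set u \<subseteq> {1..s}" using uc(1) unfolding U_def by simp
        ultimately show ?thesis unfolding L_def
        proof (intro subsetI)
          fix x assume a: "set w \<subseteq> insert (Suc s) (set u)" "set u \<subseteq> {1..s}" "x \<in> set w"
          then have "x = Suc s \<or> x \<in> {1..s}" by blast
          then show "x \<in> {1..Suc s}" by auto
        qed
      qed
      moreover have "\<forall>i\<in>{1..L}. count_list w i = b i"
      proof
        fix i assume i: "i \<in> {1..L}"
        show "count_list w i = b i"
        proof (cases "i = L")
          case True then show ?thesis using uc(3) count_mrg[OF lcs(1) Ulet(2)[OF uc(1)]] lcs by simp
        next
          case False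
          then have "i \<in> {1..s}" using i unfolding L_def by auto
          then show ?thesis using uc(3) count_mrg[OF lcs(1) Ulet(2)[OF uc(1)]] uc(1) False
            unfolding U_def by simp
        qed
      qed
      moreover have "card (descents w) = j"
        using descents_card[of w] uc(3) ndes_mrg[OF Ulet(1)[OF uc(1)] lcs(1)] lcs(3) by simp
      ultimately show "w \<in> W" unfolding W_def by simp
    qed
  qed
  have inj: "inj_on M Sig"
  proof (rule inj_onI)
    fix x y assume x: "x \<in> Sig" and y: "y \<in> Sig" and e: "M x = M y"
    obtain u cs where xu: "x = (u, cs)" "u \<in> U b s" "cs \<in> C u" using x unfolding Sig_def by auto
    obtain u' cs' where yu: "y = (u', cs')" "u' \<in> U b s" "cs' \<in> C u'" using y unfolding Sig_def by auto
    have l1: "length cs = Suc (length u)" and l2: "length cs' = Suc (length u')"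
      using xu yu unfolding C_def by auto
    have e': "mrg L u cs = mrg L u' cs'" using e xu yu unfolding M_def by simp
    have "u = u'" using filter_mrg[OF Ulet(2)[OF xu(2)] l1] filter_mrg[OF Ulet(2)[OF yu(2)] l2] e' by simp
    moreover have "cs = cs'" using gaps_mrg[OF Ulet(2)[OF xu(2)] l1] gaps_mrg[OF Ulet(2)[OF yu(2)] l2] e' by simp
    ultimately show "x = y" using xu yu by simp
  qed
  have finC: "finite (C u)" for u unfolding C_def by (rule fin_lists)
  define g where "g d = (if d \<le> j then ((psum b s - d) choose (j - d)) * ((b L + d) choose j) else 0)" for d
  have cardC: "card (C u) = g (ndes u)" if "u \<in> U b s" for u
    unfolding C_def g_def using inner_count[of u "b L" j] that unfolding U_def by simp
  have "newcomb (Suc s) b j = card W"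
    unfolding newcomb_def W_def L_def psum_def by (simp add: conj_assoc)
  also have "\<dots> = card Sig" unfolding W_eq using inj by (rule card_image)
  also have "\<dots> = (\<Sum>u\<in>U b s. card (C u))" unfolding Sig_def using finite_U finC by simp
  also have "\<dots> = (\<Sum>u\<in>U b s. g (ndes u))" using cardC by simp
  also have "\<dots> = (\<Sum>d\<in>{0..psum b s - pmax b s}. (\<Sum>u\<in>{u \<in> U b s. ndes u = d}. g (ndes u)))"
    by (rule sum.group[symmetric]) (use finite_U ndes_U_bound[OF s] in auto)
  also have "\<dots> = (\<Sum>d\<in>{0..psum b s - pmax b s}. newcomb s b d * g d)"
    by (rule sum.cong) (auto simp: newcomb_U)
  also have "\<dots> = (\<Sum>d\<in>{0..min (psum b s - pmax b s) j}.
     newcomb s b d * ((psum b s - d) choose (j - d)) * ((b (Suc s) + d) choose j))"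
    by (rule sum.mono_neutral_cong_right) (auto simp: g_def L_def)
  finally show ?thesis .
qed

lemma newcomb1: "newcomb 1 b d = (if d = 0 then 1 else 0)"
proof -
  have "U b 1 = {replicate (b 1) 1}"
  proof
    show "U b 1 \<subseteq> {replicate (b 1) 1}"
    proof
      fix u assume "u \<in> U b 1"
      then have "set u \<subseteq> {1}" "length u = b 1" unfolding U_def psum_def by auto
      then have "u = replicate (b 1) 1" by (intro replicate_eqI) auto
      then show "u \<in> {replicate (b 1) 1}" by simp
    qed
    show "{replicate (b 1) 1} \<subseteq> U b 1" unfolding U_def psum_def by (auto simp: count_list_rep)
  qed
  moreover have "{u \<in> {replicate (b 1) 1}. ndes u = d} = (if d = 0 then {replicate (b 1) 1} else {})"
    using ndes_rep0[of "b 1" 1] by auto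
  ultimately show ?thesis unfolding newcomb_U by simp
qed



definition SS :: "nat \<Rightarrow> (nat \<Rightarrow> nat) \<Rightarrow> nat \<Rightarrow> nat" where
  "SS n b k = (\<Sum>i\<in>newcomb_delta n b k. newcomb_term n b k i)"

lemma delta2: "newcomb_delta 2 b k = {\<lambda>_. undefined}"
  unfolding newcomb_delta_def by auto

lemma SS2: "SS 2 b k = (b 1 choose k) * (b 2 choose k)"
  unfolding SS_def delta2 newcomb_term_def by simp

lemma newcomb2: "newcomb 2 b k = (b 1 choose k) * (b 2 choose k)"
proof -
  have "psum b 1 = b 1" "pmax b 1 = b 1" unfolding psum_def pmax_def by simp_all
  moreover have "newcomb (Suc 0) b 0 = 1" using newcomb1[of b 0] by simp
  ultimately show ?thesis using recur[of 1 b k] by (simp add: numeral_2_eq_2)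
qed

lemma finite_delta: "finite (newcomb_delta n b k)"
proof (rule finite_subset)
  show "newcomb_delta n b k \<subseteq> PiE {2..n-1} (\<lambda>s. {0..psum b s})"
  proof
    fix x assume "x \<in> newcomb_delta n b k"
    then have x: "x \<in> {2..n-1} \<rightarrow>\<^sub>E UNIV" "\<forall>s\<in>{2..n-1}. x s \<le> psum b s - pmax b s"
      unfolding newcomb_delta_def by auto
    have "\<forall>s\<in>{2..n-1}. x s \<in> {0..psum b s}" using x(2) by fastforce
    moreover have "x \<in> extensional {2..n-1}" using x(1) by (simp add: PiE_iff)
    ultimately show "x \<in> PiE {2..n-1} (\<lambda>s. {0..psum b s})" by (simp add: PiE_iff)
  qed
  show "finite (PiE {2..n-1} (\<lambda>s. {0..psum b s}))" by (rule finite_PiE) auto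
qed

lemma term_step:
  assumes "n \<ge> 2"
  shows "newcomb_term (Suc n) b k (i'(n := d)) =
    newcomb_term n b d i' * ((psum b n - d) choose (k - d)) * ((b (Suc n) + d) choose k)"
proof -
  have iv: "{2..Suc n - 1} = insert n {2..n-1}" using assms by auto
  have n2: "2 \<noteq> Suc n" using assms by simp
  have "(\<Prod>s\<in>{2..n-1}. ((psum b s - (i'(n := d, Suc n := k)) s) choose ((i'(n := d, Suc n := k)) (Suc s) - (i'(n := d, Suc n := k)) s)) *
           ((b (Suc s) + (i'(n := d, Suc n := k)) s) choose (i'(n := d, Suc n := k)) (Suc s)))
      = (\<Prod>s\<in>{2..n-1}. ((psum b s - (i'(n := d)) s) choose ((i'(n := d)) (Suc s) - (i'(n := d)) s)) *
           ((b (Suc s) + (i'(n := d)) s) choose (i'(n := d)) (Suc s)))"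
    by (rule prod.cong) auto
  then show ?thesis
    unfolding newcomb_term_def Let_def iv using assms n2
    by (simp add: prod.insert algebra_simps)
qed

lemma SS_step:
  assumes n: "n \<ge> 2"
  shows "SS (Suc n) b k = (\<Sum>d\<in>{0..min (psum b n - pmax b n) k}.
     SS n b d * ((psum b n - d) choose (k - d)) * ((b (Suc n) + d) choose k))"
proof -
  define D where "D = {0..min (psum b n - pmax b n) k}"
  define h where "h = (\<lambda>(d::nat, i'::nat \<Rightarrow> nat). i'(n := d))"
  define h' where "h' = (\<lambda>i::nat \<Rightarrow> nat. (i n, i(n := undefined)))"
  have bij: "bij_betw h (Sigma D (\<lambda>d. newcomb_delta n b d)) (newcomb_delta (Suc n) b k)"
  proof (rule bij_betw_byWitness[where f' = h'])
    show "\<forall>a\<in>Sigma D (\<lambda>d. newcomb_delta n b d). h' (h a) = a"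
    proof
      fix a assume a: "a \<in> Sigma D (\<lambda>d. newcomb_delta n b d)"
      then obtain d i' where ai: "a = (d, i')" "i' \<in> newcomb_delta n b d" by auto
      then have "i' \<in> {2..n-1} \<rightarrow>\<^sub>E UNIV" unfolding newcomb_delta_def by auto
      moreover have "n \<notin> {2..n-1}" using n by auto
      ultimately have "i' n = undefined" by (rule PiE_arb)
      then have "i'(n := undefined) = i'" by auto
      then show "h' (h a) = a" using ai unfolding h_def h'_def by simp
    qed
    show "\<forall>a'\<in>newcomb_delta (Suc n) b k. h (h' a') = a'"
      unfolding h_def h'_def by simp
    show "h ` Sigma D (\<lambda>d. newcomb_delta n b d) \<subseteq> newcomb_delta (Suc n) b k"
    proof
      fix x assume "x \<in> h ` Sigma D (\<lambda>d. newcomb_delta n b d)"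
      then obtain d i' where x: "x = i'(n := d)" "d \<in> D" "i' \<in> newcomb_delta n b d"
        unfolding h_def by auto
      have pe: "i' \<in> {2..n-1} \<rightarrow>\<^sub>E UNIV" and con: "\<forall>s\<in>{2..n-1}. i' s \<le> min (psum b s - pmax b s) ((i'(n := d)) (Suc s))"
        using x(3) unfolding newcomb_delta_def by auto
      have "x \<in> {2..Suc n - 1} \<rightarrow>\<^sub>E UNIV" using pe n unfolding x(1) by (auto simp: PiE_iff extensional_def)
      moreover have "\<forall>s\<in>{2..Suc n - 1}. x s \<le> min (psum b s - pmax b s) ((x(Suc n := k)) (Suc s))"
      proof
        fix s assume s: "s \<in> {2..Suc n - 1}"
        show "x s \<le> min (psum b s - pmax b s) ((x(Suc n := k)) (Suc s))"
        proof (cases "s = n")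
          case True
          then show ?thesis using x(1,2) unfolding D_def by simp
        next
          case False
          then have "s \<in> {2..n-1}" using s by auto
          then show ?thesis using con False x(1) by auto
        qed
      qed
      ultimately show "x \<in> newcomb_delta (Suc n) b k" unfolding newcomb_delta_def by simp
    qed
    show "h' ` newcomb_delta (Suc n) b k \<subseteq> Sigma D (\<lambda>d. newcomb_delta n b d)"
    proof
      fix y assume "y \<in> h' ` newcomb_delta (Suc n) b k"
      then obtain i where y: "y = (i n, i(n := undefined))" "i \<in> newcomb_delta (Suc n) b k"
        unfolding h'_def by auto
      have pe: "i \<in> {2..n} \<rightarrow>\<^sub>E UNIV" and con: "\<forall>s\<in>{2..n}. i s \<le> min (psum b s - pmax b s) ((i(Suc n := k)) (Suc s))"
        using y(2) unfolding newcomb_delta_def by auto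
      have "n \<in> {2..n}" using n by simp
      then have "i n \<le> min (psum b n - pmax b n) ((i(Suc n := k)) (Suc n))" using con by blast
      then have "i n \<in> D" unfolding D_def by simp
      moreover have "i(n := undefined) \<in> {2..n-1} \<rightarrow>\<^sub>E UNIV"
      proof (rule PiE_I)
        fix x assume xn: "x \<notin> {2..n-1}"
        show "(i(n := undefined)) x = undefined"
        proof (cases "x = n")
          case True then show ?thesis by simp
        next
          case False
          with xn have "x \<notin> {2..n}" by auto
          then show ?thesis using PiE_arb[OF pe] False by simp
        qed
      qed simp
      moreover have "\<forall>s\<in>{2..n-1}. (i(n := undefined)) s \<le> min (psum b s - pmax b s) (((i(n := undefined))(n := i n)) (Suc s))"
      proof
        fix s assume s: "s \<in> {2..n-1}"
        then have sn: "s \<in> {2..n}" "s \<noteq> n" "Suc s \<noteq> Suc n" by auto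
        have "i s \<le> min (psum b s - pmax b s) ((i(Suc n := k)) (Suc s))" using con sn(1) by blast
        then show "(i(n := undefined)) s \<le> min (psum b s - pmax b s) (((i(n := undefined))(n := i n)) (Suc s))"
          using sn by auto
      qed
      ultimately show "y \<in> Sigma D (\<lambda>d. newcomb_delta n b d)" unfolding y(1) newcomb_delta_def by auto
    qed
  qed
  have "SS (Suc n) b k = (\<Sum>p\<in>Sigma D (\<lambda>d. newcomb_delta n b d). newcomb_term (Suc n) b k (h p))"
    unfolding SS_def by (rule sum.reindex_bij_betw[OF bij, symmetric])
  also have "\<dots> = (\<Sum>d\<in>D. \<Sum>i'\<in>newcomb_delta n b d. newcomb_term (Suc n) b k (i'(n := d)))"
    unfolding h_def by (subst sum.Sigma) (auto simp: D_def finite_delta split_def)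
  also have "\<dots> = (\<Sum>d\<in>D. \<Sum>i'\<in>newcomb_delta n b d.
       newcomb_term n b d i' * (((psum b n - d) choose (k - d)) * ((b (Suc n) + d) choose k)))"
    using term_step[OF n] by (simp add: mult.assoc)
  also have "\<dots> = (\<Sum>d\<in>D. SS n b d * (((psum b n - d) choose (k - d)) * ((b (Suc n) + d) choose k)))"
    unfolding SS_def by (simp add: sum_distrib_right)
  finally show ?thesis unfolding D_def by (simp add: mult.assoc)
qed

lemma main_gen: "n \<ge> 2 \<Longrightarrow> newcomb n b k = SS n b k"
proof (induction n arbitrary: k rule: nat_induct_at_least)
  case base
  then show ?case by (simp add: SS2 newcomb2)
next
  case (Suc n)
  have "newcomb (Suc n) b k = (\<Sum>d\<in>{0..min (psum b n - pmax b n) k}.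
     newcomb n b d * ((psum b n - d) choose (k - d)) * ((b (Suc n) + d) choose k))"
    using Suc.hyps by (intro recur) simp
  also have "\<dots> = SS (Suc n) b k" using SS_step[OF Suc.hyps] Suc.IH by simp
  finally show ?case .
qed

theorem mainTheorem11:
  fixes n k :: nat and b :: "nat \<Rightarrow> nat"
  assumes "n \<ge> 3"
    and "\<forall>j\<in>{1..n}. b j > 0"
    and "k \<le> psum b n - pmax b n"
  shows "newcomb n b k = (\<Sum>i\<in>newcomb_delta n b k. newcomb_term n b k i)"
  using main_gen[of n b k] assms(1) unfolding SS_def by simp


end
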